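(* Let $k,r,h$ be positive integers with $r\mid(k+h)$, and let $k'\le k$ be the largest integer divisible by $r$. If there exists a maximally recoverable local $(k,r,h)$-code over a finite field $\mathbb{F}$, then there exists a maximally recoverable data-local $(k',r,h)$-code over the same field $\mathbb{F}$.
   Context: Local codes: for positive integers $k,r,h$ with $r\mid(k+h)$, a local $(k,r,h)$-code over $\mathbb{F}$ is a linear systematic code of dimension $k$ and length $n=k+h+\frac{k+h}{r}$ consisting of $k$ data symbols, $h$ heavy parity symbols (each a fixed $\mathbb{F}$-linear combination of all data symbols), and, after partitioning the $k+h$ data and heavy parity symbols into $\frac{k+h}{r}$ groups of size $r$, one local parity per group equal to the sum (XOR in characteristic $2$) of the $r$ symbols of that group. A local group is such a group of $r$ symbols together with its local parity. A local $(k,r,h)$-code is maximally recoverable if for every set $E$ of coordinates obtained by picking exactly one coordinate from each of the $\frac{k+h}{r}$ local groups, puncturing the code in $E$ (deleting those coordinates) yields a maximum distance separable $[k+h,k]$ code (length $k+h$, dimension $k$, minimum distance $h+1$). Data-local codes: for positive integers $k',r,h$ with $r\mid k'$, a data-local $(k',r,h)$-code over $\mathbb{F}$ is a linear systematic code of dimension $k'$ and length $k'+\frac{k'}{r}+h$ consisting of $k'$ data symbols partitioned into $\frac{k'}{r}$ groups of size $r$, one local parity per group equal to the sum of the $r$ data symbols of the group, and $h$ heavy parity symbols each a fixed $\mathbb{F}$-linear combination of all data symbols. A local group is $r$ data symbols together with their local parity. A data-local $(k',r,h)$-code is maximally recoverable if for every set $E$ obtained by picking exactly one coordinate from each of the $\frac{k'}{r}$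 local groups, puncturing in $E$ yields a maximum distance separable $[k'+h,k']$ code. *)

theory Defs
  imports Complex_Main "HOL-Library.Function_Algebras"
begin

text \<open>Words are functions nat => F; a code of length n lives on a finite coordinate
set S (card S = n) and its words vanish outside S.
Vector-space structure on words: pointwise addition (Function_Algebras) and
pointwise scalar multiplication fscale.\<close>

definition fscale :: "'a::field \<Rightarrow> (nat \<Rightarrow> 'a) \<Rightarrow> (nat \<Rightarrow> 'a)" where
  "fscale c w = (\<lambda>i. c * w i)"

lemma vector_space_fscale: "vector_space (fscale :: 'a::field \<Rightarrow> _)"
  by unfold_locales (auto simp: fscale_def algebra_simps fun_eq_iff)

definition hweight :: "nat set \<Rightarrow> (nat \<Rightarrow> 'a::zero) \<Rightarrow> nat" where
  "hweight S w = card {i \<in> S. w i \<noteq> 0}"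

definition has_min_dist :: "(nat \<Rightarrow> 'a::zero) set \<Rightarrow> nat set \<Rightarrow> nat \<Rightarrow> bool" where
  "has_min_dist C S d \<longleftrightarrow>
     (\<forall>c\<in>C. c \<noteq> 0 \<longrightarrow> d \<le> hweight S c) \<and>
     ((\<exists>c\<in>C. c \<noteq> 0) \<longrightarrow> (\<exists>c\<in>C. c \<noteq> 0 \<and> hweight S c = d))"

definition is_MDS :: "(nat \<Rightarrow> 'a::field) set \<Rightarrow> nat set \<Rightarrow> nat \<Rightarrow> nat \<Rightarrow> bool" where
  "is_MDS C S n k \<longleftrightarrow>
     finite S \<and> card S = n \<and> (\<forall>c\<in>C. \<forall>i. i \<notin> S \<longrightarrow> c i = 0) \<and>
     module.subspace fscale C \<and> vector_space.dim fscale C = k \<and>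
     has_min_dist C S (n - k + 1)"

text \<open>Puncturing in E: delete the coordinates in E (words are set to 0 there, so
the punctured code lives on the coordinate set S = {0..<n} - E).\<close>
definition puncture :: "(nat \<Rightarrow> 'a::zero) set \<Rightarrow> nat set \<Rightarrow> (nat \<Rightarrow> 'a) set" where
  "puncture C E = (\<lambda>c. \<lambda>i. if i \<in> E then 0 else c i) ` C"

definition msgs :: "nat \<Rightarrow> (nat \<Rightarrow> 'a::zero) set" where
  "msgs k = {x. \<forall>i\<ge>k. x i = 0}"

definition picks_one :: "nat set \<Rightarrow> (nat \<Rightarrow> nat set) \<Rightarrow> nat \<Rightarrow> bool" where
  "picks_one E G m \<longleftrightarrow> E \<subseteq> (\<Union>t<m. G t) \<and> (\<forall>t<m. card (E \<inter> G t) = 1)"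

definition is_grouping :: "(nat \<Rightarrow> nat) \<Rightarrow> nat \<Rightarrow> nat \<Rightarrow> bool" where
  "is_grouping g N r \<longleftrightarrow> 0 < r \<and> r dvd N \<and> (\<forall>l<N. g l < N div r) \<and>
     (\<forall>t<N div r. card {l. l < N \<and> g l = t} = r)"

text \<open>Coordinates: 0..k-1 data, k..k+h-1 heavy parities (heavy parity j equals
sum over l<k of H j l * x l), k+h+t local parity of group t, t < (k+h) div r.\<close>
definition local_sym :: "(nat \<Rightarrow> nat \<Rightarrow> 'a::field) \<Rightarrow> nat \<Rightarrow> (nat \<Rightarrow> 'a) \<Rightarrow> nat \<Rightarrow> 'a" where
  "local_sym H k x i = (if i < k then x i else (\<Sum>l<k. H (i - k) l * x l))"

definition local_enc :: "(nat \<Rightarrow> nat \<Rightarrow> 'a::field) \<Rightarrow> (nat \<Rightarrow> nat) \<Rightarrow> nat \<Rightarrow> nat \<Rightarrow> nat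
    \<Rightarrow> (nat \<Rightarrow> 'a) \<Rightarrow> (nat \<Rightarrow> 'a)" where
  "local_enc H g k r h x = (\<lambda>i.
     if i < k + h then local_sym H k x i
     else if i < k + h + (k + h) div r then
       (\<Sum>l\<in>{l. l < k + h \<and> g l = i - (k + h)}. local_sym H k x l)
     else 0)"

definition local_code :: "(nat \<Rightarrow> nat \<Rightarrow> 'a::field) \<Rightarrow> (nat \<Rightarrow> nat) \<Rightarrow> nat \<Rightarrow> nat \<Rightarrow> nat
    \<Rightarrow> (nat \<Rightarrow> 'a) set" where
  "local_code H g k r h = local_enc H g k r h ` msgs k"

definition local_group :: "(nat \<Rightarrow> nat) \<Rightarrow> nat \<Rightarrow> nat \<Rightarrow> nat \<Rightarrow> nat set" where
  "local_group g k h t = {l. l < k + h \<and> g l = t} \<union> {k + h + t}"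

definition MR_local :: "(nat \<Rightarrow> nat \<Rightarrow> 'a::field) \<Rightarrow> (nat \<Rightarrow> nat) \<Rightarrow> nat \<Rightarrow> nat \<Rightarrow> nat \<Rightarrow> bool" where
  "MR_local H g k r h \<longleftrightarrow> is_grouping g (k + h) r \<and>
     (\<forall>E. picks_one E (local_group g k h) ((k + h) div r) \<longrightarrow>
        is_MDS (puncture (local_code H g k r h) E)
               ({0..<k + h + (k + h) div r} - E) (k + h) k)"

text \<open>Coordinates: 0..k-1 data, k+t local parity of group t (t < k div r),
k + k div r + j heavy parity j (j < h).\<close>
definition dl_enc :: "(nat \<Rightarrow> nat \<Rightarrow> 'a::field) \<Rightarrow> (nat \<Rightarrow> nat) \<Rightarrow> nat \<Rightarrow> nat \<Rightarrow> nat
    \<Rightarrow> (nat \<Rightarrow> 'a) \<Rightarrow> (nat \<Rightarrow> 'a)" where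
  "dl_enc H g k r h x = (\<lambda>i.
     if i < k then x i
     else if i < k + k div r then (\<Sum>l\<in>{l. l < k \<and> g l = i - k}. x l)
     else if i < k + k div r + h then (\<Sum>l<k. H (i - (k + k div r)) l * x l)
     else 0)"

definition dl_code :: "(nat \<Rightarrow> nat \<Rightarrow> 'a::field) \<Rightarrow> (nat \<Rightarrow> nat) \<Rightarrow> nat \<Rightarrow> nat \<Rightarrow> nat
    \<Rightarrow> (nat \<Rightarrow> 'a) set" where
  "dl_code H g k r h = dl_enc H g k r h ` msgs k"

definition dl_group :: "(nat \<Rightarrow> nat) \<Rightarrow> nat \<Rightarrow> nat \<Rightarrow> nat set" where
  "dl_group g k t = {l. l < k \<and> g l = t} \<union> {k + t}"

definition MR_data_local :: "(nat \<Rightarrow> nat \<Rightarrow> 'a::field) \<Rightarrow> (nat \<Rightarrow> nat) \<Rightarrow> nat \<Rightarrow> nat \<Rightarrow> nat \<Rightarrow> bool" where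
  "MR_data_local H g k r h \<longleftrightarrow> is_grouping g k r \<and>
     (\<forall>E. picks_one E (dl_group g k) (k div r) \<longrightarrow>
        is_MDS (puncture (dl_code H g k r h) E)
               ({0..<k + k div r + h} - E) (k + h) k)"

end

theory Submission
  imports Defs "HOL-Library.FuncSet"
begin

interpretation fv: vector_space "fscale :: 'a::field \<Rightarrow> (nat \<Rightarrow> 'a) \<Rightarrow> _"
  by (rule vector_space_fscale)

lemma sum_fun_app: "(sum f A) x = (\<Sum>a\<in>A. f a x)" for f :: "'b \<Rightarrow> nat \<Rightarrow> 'a::comm_monoid_add"
  by (induction A rule: infinite_finite_induct) auto

definition supp_set :: "nat set \<Rightarrow> (nat \<Rightarrow> 'a::zero) set" where
  "supp_set P = {w. \<forall>i. i \<notin> P \<longrightarrow> w i = 0}"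

lemma card_supp_set:
  assumes "finite P"
  shows "finite (supp_set P :: (nat \<Rightarrow> 'a::{zero,finite}) set) \<and>
         card (supp_set P :: (nat \<Rightarrow> 'a) set) = card (UNIV :: 'a set) ^ card P"
proof -
  let ?f = "\<lambda>w::nat \<Rightarrow> 'a. restrict w P"
  have bij: "bij_betw ?f (supp_set P) (PiE P (\<lambda>_. UNIV))"
  proof (rule bij_betw_imageI)
    show "inj_on ?f (supp_set P)"
    proof (rule inj_onI)
      fix x y assume x: "x \<in> supp_set P" and y: "y \<in> supp_set P" and e: "?f x = ?f y"
      show "x = y"
      proof
        fix i show "x i = y i"
        proof (cases "i \<in> P")
          case True
          have "restrict x P i = restrict y P i" using e by simp
          then show ?thesis using True by simp
        next
          case False then show ?thesis using x y by (simp add: supp_set_def)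
        qed
      qed
    qed
    show "?f ` supp_set P = PiE P (\<lambda>_. UNIV)"
    proof
      show "?f ` supp_set P \<subseteq> PiE P (\<lambda>_. UNIV)" by auto
      show "PiE P (\<lambda>_. UNIV) \<subseteq> ?f ` supp_set P"
      proof
        fix u assume u: "u \<in> PiE P (\<lambda>_. UNIV :: 'a set)"
        have "(\<lambda>i. if i \<in> P then u i else 0) \<in> supp_set P" by (auto simp: supp_set_def)
        moreover have "?f (\<lambda>i. if i \<in> P then u i else 0) = u"
          using u by (auto simp: fun_eq_iff restrict_def PiE_def extensional_def)
        ultimately show "u \<in> ?f ` supp_set P"
          by (intro image_eqI[where x="\<lambda>i. if i \<in> P then u i else 0"]) simp_all
      qed
    qed
  qed
  have fin: "finite (PiE P (\<lambda>_. UNIV :: 'a set))" using assms by (intro finite_PiE) auto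
  have "card (PiE P (\<lambda>_. UNIV :: 'a set)) = card (UNIV :: 'a set) ^ card P"
    using card_PiE[OF assms, of "\<lambda>_. UNIV::'a set"] by (metis prod_constant)
  moreover have "finite (supp_set P :: (nat \<Rightarrow> 'a) set)" using bij_betw_finite[OF bij] fin by blast
  moreover have "card (supp_set P :: (nat \<Rightarrow> 'a) set) = card (PiE P (\<lambda>_. UNIV :: 'a set))" using bij_betw_same_card[OF bij] .
  ultimately show ?thesis by simp
qed

lemma msgs_supp: "msgs K = supp_set {0..<K}"
  by (auto simp: msgs_def supp_set_def)

lemma msgs_add: "y \<in> msgs K \<Longrightarrow> z \<in> msgs K \<Longrightarrow> y + z \<in> msgs K" for y z :: "nat \<Rightarrow> 'a::monoid_add"
  by (auto simp: msgs_def)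
lemma msgs_scale: "y \<in> msgs K \<Longrightarrow> fscale c y \<in> msgs K"
  by (auto simp: msgs_def fscale_def)
lemma msgs_zero: "0 \<in> msgs K"
  by (auto simp: msgs_def)

lemma lin_sum:
  fixes v :: "'b \<Rightarrow> nat \<Rightarrow> 'a::comm_monoid_add"
  assumes add: "\<And>y z. y \<in> msgs K \<Longrightarrow> z \<in> msgs K \<Longrightarrow> \<psi> (y + z) = \<psi> y + \<psi> z"
    and z: "\<psi> 0 = 0"
    and fin: "finite I" and v: "\<And>i. i \<in> I \<Longrightarrow> v i \<in> msgs K"
  shows "\<psi> (\<Sum>i\<in>I. v i) = (\<Sum>i\<in>I. \<psi> (v i)) \<and> (\<Sum>i\<in>I. v i) \<in> msgs K"
  using fin v
proof (induction I rule: finite_induct)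
  case empty then show ?case using z msgs_zero by (simp add: zero_fun_def)
next
  case (insert x F)
  have vx: "v x \<in> msgs K" using insert by auto
  have sF: "sum v F \<in> msgs K" "\<psi> (sum v F) = (\<Sum>i\<in>F. \<psi> (v i))" using insert by auto
  have "sum v (insert x F) = v x + sum v F" using insert(1,2) by (rule sum.insert)
  moreover have "(\<Sum>i\<in>insert x F. \<psi> (v i)) = \<psi> (v x) + (\<Sum>i\<in>F. \<psi> (v i))" using insert(1,2) by (rule sum.insert)
  ultimately show ?case using add[OF vx sF(1)] sF msgs_add[OF vx sF(1)] by metis
qed


lemma fun_nz: "f i \<noteq> 0 \<Longrightarrow> f \<noteq> (0::nat \<Rightarrow> 'a::zero)"
  by auto

lemma fscale_zero_left: "fscale 0 w = 0"
  by (simp add: fscale_def zero_fun_def)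

lemma gen_MDS:
  fixes \<psi> :: "(nat \<Rightarrow> 'a::{field,finite}) \<Rightarrow> (nat \<Rightarrow> 'a)"
  assumes S: "finite S" "card S = n" "K \<le> n"
   and add: "\<And>y z. y \<in> msgs K \<Longrightarrow> z \<in> msgs K \<Longrightarrow> \<psi> (y + z) = \<psi> y + \<psi> z"
   and scl: "\<And>c y. y \<in> msgs K \<Longrightarrow> \<psi> (fscale c y) = fscale c (\<psi> y)"
   and inj0: "\<And>y. y \<in> msgs K \<Longrightarrow> \<psi> y = 0 \<Longrightarrow> y = 0"
   and supp: "\<And>y i. y \<in> msgs K \<Longrightarrow> i \<notin> S \<Longrightarrow> \<psi> y i = 0"
   and dist: "\<And>y. y \<in> msgs K \<Longrightarrow> \<psi> y \<noteq> 0 \<Longrightarrow> n - K + 1 \<le> hweight S (\<psi> y)"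
  shows "is_MDS (\<psi> ` msgs K) S n K"
proof -
  let ?C = "\<psi> ` msgs K"
  have z: "\<psi> 0 = 0"
    using scl[of 0 0] msgs_zero[of K] by (simp add: fscale_zero_left)
  have dmsg: "y + fscale (-1) z \<in> msgs K" if "y \<in> msgs K" "z \<in> msgs K" for y z
    using that msgs_add msgs_scale by blast
  have dpsi: "\<psi> (y + fscale (-1) z) = \<psi> y - \<psi> z" if "y \<in> msgs K" "z \<in> msgs K" for y z
  proof -
    have "\<psi> (y + fscale (-1) z) = \<psi> y + fscale (-1) (\<psi> z)"
      using that add[of y "fscale (-1) z"] scl[of z "-1"] msgs_scale[of z K "-1"] by simp
    then show ?thesis by (simp add: fscale_def fun_eq_iff)
  qed
  have deq: "y + fscale (-1) z = 0 \<Longrightarrow> y = z" for y z :: "nat \<Rightarrow> 'a"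
    by (simp add: fscale_def fun_eq_iff)
  have inj: "inj_on \<psi> (msgs K)"
  proof (rule inj_onI)
    fix y z assume y: "y \<in> msgs K" and zz: "z \<in> msgs K" and e: "\<psi> y = \<psi> z"
    then have "\<psi> (y + fscale (-1) z) = 0" using dpsi by simp
    then show "y = z" using inj0 dmsg[OF y zz] deq by blast
  qed
  define e where "e i = (\<lambda>j::nat. if j = i then (1::'a) else 0)" for i :: nat
  have e_msgs: "i < K \<Longrightarrow> e i \<in> msgs K" for i by (auto simp: e_def msgs_def)
  have expand: "y = (\<Sum>i<K. fscale (y i) (e i))" if "y \<in> msgs K" for y
  proof
    fix j
    have "(\<Sum>i<K. fscale (y i) (e i)) j = (\<Sum>i<K. y i * (if j = i then 1 else 0))"
      by (simp add: sum_fun_app fscale_def e_def)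
    also have "\<dots> = (if j < K then y j else 0)"
      by (simp add: sum.delta[of "{..<K}" j y, simplified] if_distrib cong: if_cong)
    also have "\<dots> = y j" using that by (auto simp: msgs_def)
    finally show "y j = (\<Sum>i<K. fscale (y i) (e i)) j" by simp
  qed
  have psi_expand: "\<psi> y = (\<Sum>i<K. fscale (y i) (\<psi> (e i)))" if "y \<in> msgs K" for y
  proof -
    have "\<psi> (\<Sum>i<K. fscale (y i) (e i)) = (\<Sum>i<K. \<psi> (fscale (y i) (e i)))"
      using lin_sum[of K \<psi> "{..<K}" "\<lambda>i. fscale (y i) (e i)", OF add z] e_msgs msgs_scale by blast
    also have "\<dots> = (\<Sum>i<K. fscale (y i) (\<psi> (e i)))"
      using scl e_msgs by simp
    finally show ?thesis using expand[OF that] by simp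
  qed
  have subsp: "fv.subspace ?C"
    unfolding fv.subspace_def
  proof (intro conjI ballI allI)
    show "0 \<in> ?C" using z msgs_zero by (metis image_eqI)
  next
    fix a b assume "a \<in> ?C" "b \<in> ?C"
    then obtain y w where "y \<in> msgs K" "w \<in> msgs K" "a = \<psi> y" "b = \<psi> w" by auto
    then show "a + b \<in> ?C" using add msgs_add by (metis image_eqI)
  next
    fix c a assume "a \<in> ?C"
    then obtain y where "y \<in> msgs K" "a = \<psi> y" by auto
    then show "fscale c a \<in> ?C" using scl msgs_scale by (metis image_eqI)
  qed
  define B where "B = (\<lambda>i. \<psi> (e i)) ` {..<K}"
  have injB: "inj_on (\<lambda>i. \<psi> (e i)) {..<K}"
  proof (rule inj_onI)
    fix i j assume "i \<in> {..<K}" "j \<in> {..<K}" "\<psi> (e i) = \<psi> (e j)"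
    then have "e i = e j" using inj e_msgs by (auto dest: inj_onD)
    then have "e i i = e j i" by simp
    then show "i = j" by (auto simp: e_def split: if_splits)
  qed
  have cardB: "card B = K" using injB by (simp add: B_def card_image)
  have BC: "B \<subseteq> ?C" using e_msgs by (auto simp: B_def)
  have CB: "?C \<subseteq> fv.span B"
  proof
    fix a assume "a \<in> ?C"
    then obtain y where y: "y \<in> msgs K" "a = \<psi> y" by auto
    have "(\<Sum>i<K. fscale (y i) (\<psi> (e i))) \<in> fv.span B"
      by (intro fv.span_sum fv.span_scale fv.span_base) (auto simp: B_def)
    then show "a \<in> fv.span B" using psi_expand y by simp
  qed
  have span_eq: "fv.span B = fv.span ?C"
  proof
    show "fv.span B \<subseteq> fv.span ?C" using BC by (rule fv.span_mono)
    show "fv.span ?C \<subseteq> fv.span B" using CB by (intro fv.span_minimal) (auto intro: fv.subspace_span)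
  qed
  have indep: "fv.independent B"
  proof (rule fv.independent_if_scalars_zero)
    show "finite B" by (simp add: B_def)
  next
    fix f x assume sum0: "(\<Sum>b\<in>B. fscale (f b) b) = 0" and x: "x \<in> B"
    define y where "y = (\<lambda>j. if j < K then f (\<psi> (e j)) else 0)"
    have ym: "y \<in> msgs K" by (auto simp: y_def msgs_def)
    have "\<psi> y = (\<Sum>i<K. fscale (y i) (\<psi> (e i)))" using psi_expand ym by simp
    also have "\<dots> = (\<Sum>i<K. fscale (f (\<psi> (e i))) (\<psi> (e i)))"
      by (rule sum.cong) (auto simp: y_def)
    also have "\<dots> = (\<Sum>b\<in>B. fscale (f b) b)"
      unfolding B_def by (rule sum.reindex[OF injB, symmetric, unfolded comp_def])
    also have "\<dots> = 0" by (rule sum0)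
    finally have "y = 0" using inj0 ym by blast
    moreover obtain i where "i < K" "x = \<psi> (e i)" using x by (auto simp: B_def)
    ultimately show "f x = 0" by (metis y_def zero_fun_apply)
  qed
  have dimC: "fv.dim ?C = K"
    using fv.dim_eq_card[OF span_eq indep] cardB by simp
  have mind: "has_min_dist ?C S (n - K + 1)"
    unfolding has_min_dist_def
  proof (intro conjI ballI impI)
    fix c assume "c \<in> ?C" "c \<noteq> 0"
    then show "n - K + 1 \<le> hweight S c" using dist by auto
  next
    assume "\<exists>c\<in>?C. c \<noteq> 0"
    then obtain y0 where y0: "y0 \<in> msgs K" "\<psi> y0 \<noteq> 0" by auto
    have Kpos: "0 < K"
    proof (rule ccontr)
      assume "\<not> 0 < K"
      then have "y0 = 0" using y0 by (auto simp: msgs_def fun_eq_iff)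
      then show False using y0 z by simp
    qed
    obtain P where P: "P \<subseteq> S" "card P = K" using obtain_subset_with_card_n[of K S] S by auto
    have finP: "finite P" using P S finite_subset by blast
    define \<rho> where "\<rho> w = (\<lambda>i. if i \<in> P then w i else (0::'a))" for w
    have injr: "inj_on (\<lambda>y. \<rho> (\<psi> y)) (msgs K)"
    proof (rule inj_onI)
      fix y w assume y: "y \<in> msgs K" and w: "w \<in> msgs K" and e: "\<rho> (\<psi> y) = \<rho> (\<psi> w)"
      let ?d = "y + fscale (-1) w"
      have dm: "?d \<in> msgs K" using dmsg y w by blast
      have dP: "\<psi> ?d i = 0" if "i \<in> P" for i
      proof -
        have "\<rho> (\<psi> y) i = \<rho> (\<psi> w) i" using e by simp
        then show ?thesis using that dpsi[OF y w] by (simp add: \<rho>_def)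
      qed
      have "\<psi> ?d = 0"
      proof (rule ccontr)
        assume ne: "\<psi> ?d \<noteq> 0"
        have "{i \<in> S. \<psi> ?d i \<noteq> 0} \<subseteq> S - P" using dP by auto
        then have "hweight S (\<psi> ?d) \<le> card (S - P)"
          unfolding hweight_def using S by (intro card_mono) auto
        also have "\<dots> = n - K" using P S finP by (simp add: card_Diff_subset)
        finally show False using dist[OF dm ne] by simp
      qed
      then show "y = w" using inj0[OF dm] deq by blast
    qed
    have img: "(\<lambda>y. \<rho> (\<psi> y)) ` msgs K = supp_set P"
    proof (rule card_subset_eq)
      show "finite (supp_set P :: (nat \<Rightarrow> 'a) set)" using card_supp_set[OF finP] by blast
      show "(\<lambda>y. \<rho> (\<psi> y)) ` msgs K \<subseteq> supp_set P" by (auto simp: \<rho>_def supp_set_def)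
      have "card ((\<lambda>y. \<rho> (\<psi> y)) ` msgs K) = card (msgs K :: (nat \<Rightarrow> 'a) set)"
        using injr by (rule card_image)
      also have "\<dots> = card (UNIV :: 'a set) ^ K"
        using card_supp_set[of "{0..<K}", where 'a='a] by (simp add: msgs_supp)
      also have "\<dots> = card (supp_set P :: (nat \<Rightarrow> 'a) set)"
        using card_supp_set[OF finP, where 'a='a] P by simp
      finally show "card ((\<lambda>y. \<rho> (\<psi> y)) ` msgs K) = card (supp_set P :: (nat \<Rightarrow> 'a) set)" .
    qed
    obtain p0 where p0: "p0 \<in> P" using P Kpos by (metis card.empty ex_in_conv less_irrefl)
    define t0 where "t0 = (\<lambda>i. if i = p0 then (1::'a) else 0)"
    have "t0 \<in> supp_set P" using p0 by (auto simp: t0_def supp_set_def)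
    then obtain y where y: "y \<in> msgs K" "\<rho> (\<psi> y) = t0" using img by (metis imageE)
    have "\<psi> y p0 = 1"
    proof -
      have "\<rho> (\<psi> y) p0 = t0 p0" using y by simp
      then show ?thesis using p0 by (simp add: \<rho>_def t0_def)
    qed
    then have ne: "\<psi> y \<noteq> 0" by (metis zero_fun_apply zero_neq_one)
    have "{i \<in> S. \<psi> y i \<noteq> 0} \<subseteq> insert p0 (S - P)"
    proof
      fix i assume i: "i \<in> {i \<in> S. \<psi> y i \<noteq> 0}"
      show "i \<in> insert p0 (S - P)"
      proof (cases "i \<in> P")
        case True
        have "\<rho> (\<psi> y) i = t0 i" using y by simp
        then show ?thesis using True i by (auto simp: \<rho>_def t0_def split: if_splits)
      qed (use i in auto)
    qed
    then have "hweight S (\<psi> y) \<le> card (insert p0 (S - P))"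
      unfolding hweight_def using S by (intro card_mono) auto
    also have "\<dots> \<le> card (S - P) + 1" using S(1) by (simp add: card_insert_if)
    also have "\<dots> = n - K + 1" using P S finP by (simp add: card_Diff_subset)
    finally have "hweight S (\<psi> y) = n - K + 1" using dist[OF y(1) ne] by simp
    then show "\<exists>c\<in>?C. c \<noteq> 0 \<and> hweight S c = n - K + 1" using y(1) ne by blast
  qed
  show ?thesis unfolding is_MDS_def
    using S subsp dimC mind supp by auto
qed


lemma local_sym_comb:
  assumes "finite I"
  shows "local_sym H k (\<lambda>l. \<Sum>i\<in>I. c i * v i l) j = (\<Sum>i\<in>I. c i * local_sym H k (v i) j)"
proof (cases "j < k")
  case True then show ?thesis by (simp add: local_sym_def)
next
  case False
  have "(\<Sum>l<k. H (j - k) l * (\<Sum>i\<in>I. c i * v i l)) = (\<Sum>l<k. \<Sum>i\<in>I. c i * (H (j - k) l * v i l))"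
    by (simp add: sum_distrib_left mult.left_commute)
  also have "\<dots> = (\<Sum>i\<in>I. \<Sum>l<k. c i * (H (j - k) l * v i l))" by (rule sum.swap)
  also have "\<dots> = (\<Sum>i\<in>I. c i * (\<Sum>l<k. H (j - k) l * v i l))" by (simp add: sum_distrib_left)
  finally show ?thesis using False by (simp add: local_sym_def)
qed

lemma local_enc_low: "i < k + h \<Longrightarrow> local_enc H g k r h x i = local_sym H k x i"
  unfolding local_enc_def by simp

lemma local_enc_par: "k + h \<le> i \<Longrightarrow> i < k + h + (k + h) div r \<Longrightarrow>
   local_enc H g k r h x i = (\<Sum>l\<in>{l. l < k + h \<and> g l = i - (k + h)}. local_sym H k x l)"
  unfolding local_enc_def by simp

lemma local_enc_high: "k + h + (k + h) div r \<le> i \<Longrightarrow> local_enc H g k r h x i = 0"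
  unfolding local_enc_def by simp

lemma dl_enc_data: "i < k \<Longrightarrow> dl_enc H g k r h x i = x i"
  unfolding dl_enc_def by simp

lemma dl_enc_par: "k \<le> i \<Longrightarrow> i < k + k div r \<Longrightarrow>
   dl_enc H g k r h x i = (\<Sum>l\<in>{l. l < k \<and> g l = i - k}. x l)"
  unfolding dl_enc_def by simp

lemma dl_enc_heavy: "k + k div r \<le> i \<Longrightarrow> i < k + k div r + h \<Longrightarrow>
   dl_enc H g k r h x i = (\<Sum>l<k. H (i - (k + k div r)) l * x l)"
  unfolding dl_enc_def by simp

lemma dl_enc_high: "k + k div r + h \<le> i \<Longrightarrow> dl_enc H g k r h x i = 0"
  unfolding dl_enc_def by simp

lemma local_sym_diff:
  "local_sym H k (x - x') j = local_sym H k x j - local_sym H k x' j"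
  by (simp add: local_sym_def sum_subtractf right_diff_distrib)

lemma dl_enc_add:
  "dl_enc H g k r h (y + z) = dl_enc H g k r h y + dl_enc H g k r h z"
  by (simp add: dl_enc_def fun_eq_iff sum.distrib distrib_left)

lemma dl_enc_scale:
  "dl_enc H g k r h (fscale c y) = fscale c (dl_enc H g k r h y)"
  by (simp add: dl_enc_def fun_eq_iff fscale_def sum_distrib_left mult.left_commute)


theorem lemma7:
  fixes k r h k' :: nat
  assumes "0 < k" and "0 < r" and "0 < h" and "r dvd (k + h)"
    and "k' = (GREATEST m. m \<le> k \<and> r dvd m)"
    and "\<exists>(H :: nat \<Rightarrow> nat \<Rightarrow> 'a::{field,finite}) g. MR_local H g k r h"
  shows "\<exists>(H :: nat \<Rightarrow> nat \<Rightarrow> 'a) g. MR_data_local H g k' r h"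
proof -
  obtain H :: "nat \<Rightarrow> nat \<Rightarrow> 'a" and g where MR: "MR_local H g k r h" using assms(6) by blast
  define m where "m = (k + h) div r"
  have grp: "is_grouping g (k + h) r" using MR by (simp add: MR_local_def)
  have mds: "\<And>E. picks_one E (local_group g k h) m \<Longrightarrow>
        is_MDS (puncture (local_code H g k r h) E) ({0..<k + h + m} - E) (k + h) k"
    using MR by (simp add: MR_local_def m_def)
  have k'p: "k' \<le> k \<and> r dvd k'"
    unfolding assms(5) by (rule GreatestI_nat[of _ 0 k]) auto
  define m' where "m' = k' div r"
  have k'eq: "k' = m' * r" using k'p by (simp add: m'_def)
  have m'm: "m' \<le> m" unfolding m_def m'_def using k'p by (intro div_le_mono) simp
  define G where "G t = {l. l < k + h \<and> g l = t}" for t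
  have cardG: "t < m \<Longrightarrow> card (G t) = r" for t using grp by (simp add: is_grouping_def G_def m_def)
  have gle: "l < k + h \<Longrightarrow> g l < m" for l using grp by (simp add: is_grouping_def m_def)
  define D where "D = {l. l < k + h \<and> g l < m'}"
  have D_UN: "D = (\<Union>t\<in>{..<m'}. G t)" by (auto simp: D_def G_def)
  have cardD: "card D = k'"
  proof -
    have "card D = (\<Sum>t\<in>{..<m'}. card (G t))"
      unfolding D_UN by (rule card_UN_disjoint) (auto simp: G_def)
    also have "\<dots> = (\<Sum>t\<in>{..<m'}. r)" using cardG m'm by simp
    finally show ?thesis using k'eq by simp
  qed
  have Dsub: "D \<subseteq> {0..<k + h}" by (auto simp: D_def)
  define Q where "Q = {0..<k + h} - D"
  have cardQ: "card Q = k + h - k'" using Dsub cardD by (simp add: Q_def card_Diff_subset finite_subset)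
  obtain A where A: "A \<subseteq> Q" "card A = k - k'"
  proof -
    have "k - k' \<le> card Q" using cardQ k'p by simp
    then show ?thesis using obtain_subset_with_card_n[of "k - k'" Q] that by blast
  qed
  define R where "R = Q - A"
  have finQ: "finite Q" by (simp add: Q_def)
  have cardR: "card R = h"
    using A cardQ finQ k'p by (simp add: R_def card_Diff_subset finite_subset)
  obtain \<sigma> where \<sigma>: "bij_betw \<sigma> {0..<k'} D"
    using finite_same_card_bij[of "{0..<k'}" D] cardD Dsub finite_subset by auto
  obtain \<tau> where \<tau>: "bij_betw \<tau> {0..<h} R"
    using finite_same_card_bij[of "{0..<h}" R] cardR finQ by (auto simp: R_def)
  define P where "P = D \<union> A"
  have DA: "D \<inter> A = {}" using A by (auto simp: Q_def)
  have finA: "finite A" using A finQ finite_subset by blast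
  have finD: "finite D" using Dsub finite_subset by blast
  have cardP: "card P = k" using DA cardD A k'p finA finD by (simp add: P_def card_Un_disjoint)
  have Psub: "P \<subseteq> {0..<k + h}" using Dsub A by (auto simp: P_def Q_def)
  have finP: "finite P" using Psub finite_subset by blast
  have LG: "local_group g k h t = G t \<union> {k + h + t}" for t by (simp add: local_group_def G_def)
  have pc_mem: "(\<lambda>i. if i \<in> E then 0 else local_enc H g k r h x i) \<in> puncture (local_code H g k r h) E"
    if "x \<in> msgs k" for x E
    using that unfolding puncture_def local_code_def by blast
  have dist_loc: "h + 1 \<le> hweight ({0..<k + h + m} - E) c"
    if "picks_one E (local_group g k h) m" "c \<in> puncture (local_code H g k r h) E" "c \<noteq> 0" for E c
  proof -
    have "has_min_dist (puncture (local_code H g k r h) E) ({0..<k + h + m} - E) (k + h - k + 1)"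
      using mds[OF that(1)] by (simp add: is_MDS_def)
    then show ?thesis using that(2,3) by (simp add: has_min_dist_def)
  qed
  define E0 where "E0 = (\<lambda>t. k + h + t) ` {..<m}"
  have E0p: "picks_one E0 (local_group g k h) m"
    unfolding picks_one_def
  proof (intro conjI allI impI)
    show "E0 \<subseteq> (\<Union>t<m. local_group g k h t)" by (auto simp: E0_def LG)
    fix t assume t: "t < m"
    have "E0 \<inter> local_group g k h t = {k + h + t}" using t by (auto simp: E0_def LG G_def)
    then show "card (E0 \<inter> local_group g k h t) = 1" by simp
  qed
  define \<Phi> where "\<Phi> x = (\<lambda>i. if i \<in> P then local_sym H k x i else (0::'a))" for x
  have Phi_inj: "inj_on \<Phi> (msgs k)"
  proof (rule inj_onI)
    fix x x' assume x: "x \<in> msgs k" and x': "x' \<in> msgs k" and e: "\<Phi> x = \<Phi> x'"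
    let ?d = "x - x'"
    have dm: "?d \<in> msgs k" using x x' by (auto simp: msgs_def)
    let ?c = "\<lambda>i. if i \<in> E0 then 0 else local_enc H g k r h ?d i"
    show "x = x'"
    proof (rule ccontr)
      assume "x \<noteq> x'"
      then have "?d \<noteq> 0" by simp
      then obtain i where i: "?d i \<noteq> 0" by (metis zero_fun_apply ext)
      have ik: "i < k"
      proof (rule ccontr)
        assume "\<not> i < k"
        then have "?d i = 0" using dm unfolding msgs_def by simp
        then show False using i by simp
      qed
      have "i \<notin> E0" using ik by (auto simp: E0_def)
      then have c1: "?c i = local_enc H g k r h ?d i" by (rule if_not_P)
      have "local_enc H g k r h ?d i = local_sym H k ?d i"
        using ik unfolding local_enc_def by simp
      moreover have "local_sym H k ?d i = ?d i" using ik unfolding local_sym_def by simp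
      ultimately have "?c i = ?d i" using c1 by simp
      then have "?c i \<noteq> 0" using i by simp
      then have cne: "?c \<noteq> 0" by (rule fun_nz)
      have "h + 1 \<le> hweight ({0..<k + h + m} - E0) ?c"
        using dist_loc[OF E0p pc_mem[OF dm] cne] .
      moreover have "{j \<in> {0..<k + h + m} - E0. ?c j \<noteq> 0} \<subseteq> {0..<k + h} - P"
      proof
        fix j assume j: "j \<in> {j \<in> {0..<k + h + m} - E0. ?c j \<noteq> 0}"
        have jl: "j < k + h"
        proof (rule ccontr)
          assume "\<not> j < k + h"
          then have "j = k + h + (j - (k + h))" "j - (k + h) < m" using j by auto
          then have "j \<in> E0" unfolding E0_def by blast
          then show False using j by simp
        qed
        have "j \<notin> P"
        proof
          assume jP: "j \<in> P"
          have "\<Phi> x j = \<Phi> x' j" using e by simp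
          then have "local_sym H k ?d j = 0" using jP by (simp add: \<Phi>_def local_sym_diff)
          moreover have "j \<notin> E0" "?c j \<noteq> 0" using j by auto
          then have "local_enc H g k r h ?d j \<noteq> 0" by (simp only: if_False) simp
          then have "local_sym H k ?d j \<noteq> 0" using local_enc_low[OF jl] by metis
          ultimately show False by simp
        qed
        then show "j \<in> {0..<k + h} - P" using jl by simp
      qed
      then have "hweight ({0..<k + h + m} - E0) ?c \<le> card ({0..<k + h} - P)"
        unfolding hweight_def by (intro card_mono) auto
      moreover have "card ({0..<k + h} - P) = h" using Psub cardP finP by (simp add: card_Diff_subset)
      ultimately show False by simp
    qed
  qed
  have Phi_img: "\<Phi> ` msgs k = supp_set P"
  proof (rule card_subset_eq)
    show "finite (supp_set P :: (nat \<Rightarrow> 'a) set)" using card_supp_set[OF finP] by blast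
    show "\<Phi> ` msgs k \<subseteq> supp_set P" by (auto simp: \<Phi>_def supp_set_def)
    have "card (\<Phi> ` msgs k) = card (msgs k :: (nat \<Rightarrow> 'a) set)"
      using Phi_inj by (rule card_image)
    also have "\<dots> = card (UNIV :: 'a set) ^ k"
      using card_supp_set[of "{0..<k}", where 'a='a] by (simp add: msgs_supp)
    also have "\<dots> = card (supp_set P :: (nat \<Rightarrow> 'a) set)"
      using card_supp_set[OF finP, where 'a='a] cardP by simp
    finally show "card (\<Phi> ` msgs k) = card (supp_set P :: (nat \<Rightarrow> 'a) set)" .
  qed
  have "\<forall>i. \<exists>x. i < k' \<longrightarrow> x \<in> msgs k \<and> \<Phi> x = (\<lambda>l. if l = \<sigma> i then 1 else 0)"
  proof (intro allI impI)
    fix i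
    show "\<exists>x. i < k' \<longrightarrow> x \<in> msgs k \<and> \<Phi> x = (\<lambda>l. if l = \<sigma> i then 1 else 0)"
    proof (cases "i < k'")
      case True
      then have "\<sigma> i \<in> D" using \<sigma> by (auto simp: bij_betw_def)
      then have "(\<lambda>l. if l = \<sigma> i then (1::'a) else 0) \<in> supp_set P" by (auto simp: supp_set_def P_def)
      then obtain x where "x \<in> msgs k" "(\<lambda>l. if l = \<sigma> i then (1::'a) else 0) = \<Phi> x"
        using Phi_img[symmetric] by blast
      then show ?thesis by metis
    qed simp
  qed
  from choice[OF this] obtain Xe where Xe0: "\<forall>i. i < k' \<longrightarrow> Xe i \<in> msgs k \<and> \<Phi> (Xe i) = (\<lambda>l. if l = \<sigma> i then 1 else 0)"
    by blast
  have Xe: "Xe i \<in> msgs k" "\<Phi> (Xe i) = (\<lambda>l. if l = \<sigma> i then 1 else 0)" if "i < k'" for i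
    using Xe0 that by auto
  have \<sigma>D: "i < k' \<Longrightarrow> \<sigma> i \<in> D" for i using \<sigma> by (auto simp: bij_betw_def)
  have \<sigma>inj: "inj_on \<sigma> {0..<k'}" using \<sigma> by (simp add: bij_betw_def)
  have \<sigma>img: "\<sigma> ` {0..<k'} = D" using \<sigma> by (simp add: bij_betw_def)
  have \<tau>R: "j < h \<Longrightarrow> \<tau> j \<in> R" for j using \<tau> by (auto simp: bij_betw_def)
  have \<tau>inj: "inj_on \<tau> {0..<h}" using \<tau> by (simp add: bij_betw_def)
  have \<tau>img: "\<tau> ` {0..<h} = R" using \<tau> by (simp add: bij_betw_def)
  have XeS: "local_sym H k (Xe i) (\<sigma> i') = (if i' = i then 1 else 0)" if "i < k'" "i' < k'" for i i'
  proof -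
    have "\<sigma> i' \<in> P" using \<sigma>D[OF that(2)] by (simp add: P_def)
    then have "local_sym H k (Xe i) (\<sigma> i') = \<Phi> (Xe i) (\<sigma> i')" by (simp add: \<Phi>_def)
    also have "\<dots> = (if \<sigma> i' = \<sigma> i then 1 else 0)" using Xe(2)[OF that(1)] by simp
    also have "\<dots> = (if i' = i then 1 else 0)" using \<sigma>inj that by (auto dest: inj_onD)
    finally show ?thesis .
  qed
  have XeA: "local_sym H k (Xe i) l = 0" if "i < k'" "l \<in> A" for i l
  proof -
    have "l \<in> P" using that by (simp add: P_def)
    then have "local_sym H k (Xe i) l = \<Phi> (Xe i) l" by (simp add: \<Phi>_def)
    also have "\<dots> = (if l = \<sigma> i then 1 else 0)" using Xe(2)[OF that(1)] by simp
    also have "\<dots> = 0" using \<sigma>D[OF that(1)] that(2) DA by auto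
    finally show ?thesis .
  qed
  define X where "X y = (\<lambda>l. \<Sum>i<k'. y i * Xe i l)" for y :: "nat \<Rightarrow> 'a"
  have Xm: "X y \<in> msgs k" for y
  proof -
    have "X y l = 0" if "l \<ge> k" for l
    proof -
      have "Xe i l = 0" if "i < k'" for i using Xe(1)[OF that] \<open>l \<ge> k\<close> by (simp add: msgs_def)
      then show ?thesis by (simp add: X_def)
    qed
    then show ?thesis by (simp add: msgs_def)
  qed
  have Xsym: "local_sym H k (X y) j = (\<Sum>i<k'. y i * local_sym H k (Xe i) j)" for y j
    unfolding X_def by (rule local_sym_comb) simp
  have XS: "local_sym H k (X y) (\<sigma> i') = y i'" if "i' < k'" for y i'
  proof -
    have "local_sym H k (X y) (\<sigma> i') = (\<Sum>i<k'. if i = i' then y i else 0)"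
      unfolding Xsym by (rule sum.cong) (use that XeS in auto)
    also have "\<dots> = y i'" using that by (simp add: sum.delta')
    finally show ?thesis .
  qed
  have XA: "local_sym H k (X y) l = 0" if "l \<in> A" for y l
    unfolding Xsym using XeA that by simp
  define H' where "H' j i = local_sym H k (Xe i) (\<tau> j)" for j i
  have XR: "local_sym H k (X y) (\<tau> j) = (\<Sum>i<k'. H' j i * y i)" for y j
    unfolding Xsym H'_def by (simp add: mult.commute)
  define g' where "g' i = g (\<sigma> i)" for i
  have Gimg: "G t = \<sigma> ` {l. l < k' \<and> g' l = t}" if "t < m'" for t
  proof
    show "G t \<subseteq> \<sigma> ` {l. l < k' \<and> g' l = t}"
    proof
      fix l assume l: "l \<in> G t"
      then have "l \<in> D" using that by (auto simp: G_def D_def)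
      then obtain i where "i < k'" "l = \<sigma> i" using \<sigma>img by auto
      then show "l \<in> \<sigma> ` {l. l < k' \<and> g' l = t}" using l by (auto simp: G_def g'_def)
    qed
    show "\<sigma> ` {l. l < k' \<and> g' l = t} \<subseteq> G t"
      using \<sigma>D by (auto simp: G_def g'_def D_def)
  qed
  have cardG': "card {l. l < k' \<and> g' l = t} = r" if "t < m'" for t
  proof -
    have "inj_on \<sigma> {l. l < k' \<and> g' l = t}" using \<sigma>inj by (rule inj_on_subset) auto
    then have "card {l. l < k' \<and> g' l = t} = card (G t)" using Gimg[OF that] by (simp add: card_image)
    then show ?thesis using cardG that m'm by simp
  qed
  have grp': "is_grouping g' k' r"
    unfolding is_grouping_def
  proof (intro conjI allI impI)
    show "0 < r" by (rule assms(2))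
    show "r dvd k'" using k'p by simp
    fix l assume "l < k'"
    then show "g' l < k' div r" using \<sigma>D by (simp add: g'_def D_def m'_def)
  next
    fix t assume "t < k' div r"
    then show "card {l. l < k' \<and> g' l = t} = r" using cardG' by (simp add: m'_def)
  qed
  have m'd: "k' div r = m'" by (simp add: m'_def)
  have DG: "dl_group g' k' t = {l. l < k' \<and> g' l = t} \<union> {k' + t}" for t
    by (simp add: dl_group_def)
  have RD: "R \<inter> D = {}" by (auto simp: R_def Q_def)
  have Rsub: "R \<subseteq> {0..<k + h}" by (auto simp: R_def Q_def)
  have g'lt: "l < k' \<Longrightarrow> g' l < m'" for l using \<sigma>D by (simp add: g'_def D_def)
  have MDS': "is_MDS (puncture (dl_code H' g' k' r h) E') ({0..<k' + k' div r + h} - E') (k' + h) k'"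
    if E'p0: "picks_one E' (dl_group g' k') (k' div r)" for E'
  proof -
    have E'p: "picks_one E' (dl_group g' k') m'" using E'p0 m'd by simp
    have E'sub: "E' \<subseteq> (\<Union>t<m'. dl_group g' k' t)" using E'p by (simp add: picks_one_def)
    have E'one: "card (E' \<inter> dl_group g' k' t) = 1" if "t < m'" for t
      using E'p that by (simp add: picks_one_def)
    have E'bnd: "E' \<subseteq> {0..<k' + m'}"
    proof
      fix p assume "p \<in> E'"
      then obtain t where "t < m'" "p \<in> dl_group g' k' t" using E'sub by blast
      then show "p \<in> {0..<k' + m'}" by (auto simp: DG)
    qed
    have finE': "finite E'" using E'bnd finite_subset by blast
    have E'UN: "E' = (\<Union>t\<in>{..<m'}. E' \<inter> dl_group g' k' t)" using E'sub by blast
    have cardE': "card E' = m'"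
    proof -
      have "card E' = (\<Sum>t\<in>{..<m'}. card (E' \<inter> dl_group g' k' t))"
        by (subst E'UN, rule card_UN_disjoint) (use finE' in \<open>auto simp: DG\<close>)
      also have "\<dots> = (\<Sum>t\<in>{..<m'}. 1)" using E'one by simp
      finally show ?thesis by simp
    qed
    define N' where "N' = k' + m' + h"
    define \<psi> where "\<psi> y = (\<lambda>p. if p \<in> E' then 0 else dl_enc H' g' k' r h y p)" for y
    define S' where "S' = {0..<N'} - E'"
    define \<pi> where "\<pi> p = (if p < k' then \<sigma> p else if p < k' + m' then k + h + (p - k') else \<tau> (p - (k' + m')))" for p
    have pun: "puncture (dl_code H' g' k' r h) E' = \<psi> ` msgs k'"
      unfolding puncture_def dl_code_def image_image \<psi>_def by simp
    have \<pi>D: "p < k' \<Longrightarrow> \<pi> p = \<sigma> p \<and> \<pi> p \<in> D" for p using \<sigma>D by (simp add: \<pi>_def)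
    have \<pi>P: "k' \<le> p \<Longrightarrow> p < k' + m' \<Longrightarrow> \<pi> p = k + h + (p - k')" for p by (simp add: \<pi>_def)
    have \<pi>R: "k' + m' \<le> p \<Longrightarrow> p < N' \<Longrightarrow> \<pi> p = \<tau> (p - (k' + m')) \<and> \<pi> p \<in> R" for p
      using \<tau>R by (simp add: \<pi>_def N'_def)
    have F4: "dl_enc H' g' k' r h y p = local_enc H g k r h (X y) (\<pi> p)" if "p < N'" for y p
    proof -
      consider "p < k'" | "k' \<le> p" "p < k' + m'" | "k' + m' \<le> p" by linarith
      then show ?thesis
      proof cases
        case 1
        have "\<sigma> p < k + h" using \<pi>D[OF 1] Dsub by auto
        then show ?thesis using 1 \<pi>D[OF 1] by (simp add: dl_enc_data local_enc_low XS)
      next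
        case 2
        define t where "t = p - k'"
        have t: "t < m'" using 2 by (simp add: t_def)
        have "dl_enc H' g' k' r h y p = (\<Sum>l\<in>{l. l < k' \<and> g' l = t}. y l)"
          using 2 by (simp add: dl_enc_par m'd t_def)
        also have "\<dots> = (\<Sum>l\<in>{l. l < k' \<and> g' l = t}. local_sym H k (X y) (\<sigma> l))"
          by (rule sum.cong) (auto simp: XS)
        also have "\<dots> = (\<Sum>l\<in>\<sigma> ` {l. l < k' \<and> g' l = t}. local_sym H k (X y) l)"
          by (rule sum.reindex[symmetric, unfolded comp_def]) (rule inj_on_subset[OF \<sigma>inj], auto)
        also have "\<dots> = (\<Sum>l\<in>G t. local_sym H k (X y) l)" using Gimg[OF t] by simp
        also have "\<dots> = local_enc H g k r h (X y) (k + h + t)"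
          using local_enc_par[of k h "k + h + t" r H g "X y"] t m'm by (simp add: G_def m_def)
        finally show ?thesis using \<pi>P[OF 2] by (simp add: t_def)
      next
        case 3
        define j where "j = p - (k' + m')"
        have "\<pi> p \<in> R" "\<pi> p = \<tau> j" using \<pi>R[OF 3 that] by (auto simp: j_def)
        then have lt: "\<pi> p < k + h" using Rsub by auto
        have "dl_enc H' g' k' r h y p = (\<Sum>l<k'. H' j l * y l)"
          using 3 that by (simp add: dl_enc_heavy m'd j_def N'_def)
        then show ?thesis using lt \<open>\<pi> p = \<tau> j\<close> by (simp add: local_enc_low XR)
      qed
    qed
    have \<pi>inj: "inj_on \<pi> {0..<N'}"
    proof (rule inj_onI)
      fix p q assume p: "p \<in> {0..<N'}" and q: "q \<in> {0..<N'}" and e: "\<pi> p = \<pi> q"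
      have cls: "(p < k' \<longleftrightarrow> q < k') \<and> (p < k' + m' \<longleftrightarrow> q < k' + m')"
      proof -
        have a: "\<pi> x \<in> D \<longleftrightarrow> x < k'" if "x < N'" for x
        proof (cases "x < k'")
          case True then show ?thesis using \<pi>D[OF True] by metis
        next
          case False
          show ?thesis
          proof (cases "x < k' + m'")
            case True then show ?thesis using False \<pi>P[of x] Dsub by auto
          next
            case False2: False
            then show ?thesis using False \<pi>R[of x] that RD by auto
          qed
        qed
        have b: "\<pi> x \<in> R \<longleftrightarrow> k' + m' \<le> x" if "x < N'" for x
        proof (cases "x < k'")
          case True then show ?thesis using \<pi>D[OF True] RD by auto
        next
          case False
          show ?thesis
          proof (cases "x < k' + m'")
            case True then show ?thesis using False \<pi>P[of x] Rsub by auto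
          next
            case False2: False
            then show ?thesis using \<pi>R[of x] that by auto
          qed
        qed
        show ?thesis using a[of p] a[of q] b[of p] b[of q] p q e by auto
      qed
      consider "p < k'" | "k' \<le> p" "p < k' + m'" | "k' + m' \<le> p" by linarith
      then show "p = q"
      proof cases
        case 1
        then have "q < k'" using cls by simp
        then show ?thesis using 1 \<pi>D e \<sigma>inj by (auto dest: inj_onD)
      next
        case 2
        then have "k' \<le> q" "q < k' + m'" using cls by auto
        then show ?thesis using 2 \<pi>P e by auto
      next
        case 3
        then have q3: "k' + m' \<le> q" using cls by simp
        have "\<tau> (p - (k' + m')) = \<tau> (q - (k' + m'))" using \<pi>R[OF 3] \<pi>R[OF q3] p q e by auto
        then have "p - (k' + m') = q - (k' + m')" using \<tau>inj p q 3 q3 by (auto simp: N'_def dest: inj_onD)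
        then show ?thesis using 3 q3 by simp
      qed
    qed
    have LGchar: "\<pi> p \<in> local_group g k h t \<longleftrightarrow> p \<in> dl_group g' k' t" if "p < k' + m'" for p t
    proof (cases "p < k'")
      case True
      have "\<sigma> p < k + h" using \<pi>D[OF True] Dsub by auto
      then show ?thesis using True \<pi>D[OF True] by (auto simp: LG G_def DG g'_def)
    next
      case False
      then show ?thesis using \<pi>P[of p] that by (auto simp: LG G_def DG)
    qed
    define E where "E = \<pi> ` E' \<union> (\<lambda>t. k + h + t) ` {m'..<m}"
    have Ep: "picks_one E (local_group g k h) m"
      unfolding picks_one_def
    proof (intro conjI allI impI)
      show "E \<subseteq> (\<Union>t<m. local_group g k h t)"
      proof
        fix i assume "i \<in> E"
        then consider p where "p \<in> E'" "i = \<pi> p" | t where "t \<in> {m'..<m}" "i = k + h + t"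
          unfolding E_def by blast
        then show "i \<in> (\<Union>t<m. local_group g k h t)"
        proof cases
          case 1
          then obtain t where t: "t < m'" "p \<in> dl_group g' k' t" using E'sub by blast
          have "p < k' + m'" using 1 E'bnd by auto
          then have "i \<in> local_group g k h t" using LGchar t 1 by simp
          then show ?thesis using t m'm by auto
        next
          case 2 then show ?thesis by (auto simp: LG)
        qed
      qed
    next
      fix t assume t: "t < m"
      show "card (E \<inter> local_group g k h t) = 1"
      proof (cases "t < m'")
        case True
        have "E \<inter> local_group g k h t = \<pi> ` (E' \<inter> dl_group g' k' t)"
        proof
          show "E \<inter> local_group g k h t \<subseteq> \<pi> ` (E' \<inter> dl_group g' k' t)"
          proof
            fix i assume i: "i \<in> E \<inter> local_group g k h t"
            then consider p where "p \<in> E'" "i = \<pi> p" | t' where "t' \<in> {m'..<m}" "i = k + h + t'"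
              unfolding E_def by blast
            then show "i \<in> \<pi> ` (E' \<inter> dl_group g' k' t)"
            proof cases
              case 1
              have "p < k' + m'" using 1 E'bnd by auto
              then show ?thesis using LGchar 1 i by auto
            next
              case 2 then show ?thesis using i True by (auto simp: LG G_def)
            qed
          qed
          show "\<pi> ` (E' \<inter> dl_group g' k' t) \<subseteq> E \<inter> local_group g k h t"
          proof
            fix i assume "i \<in> \<pi> ` (E' \<inter> dl_group g' k' t)"
            then obtain p where p: "p \<in> E'" "p \<in> dl_group g' k' t" "i = \<pi> p" by auto
            have "p < k' + m'" using p E'bnd by auto
            then show "i \<in> E \<inter> local_group g k h t" using LGchar p by (auto simp: E_def)
          qed
        qed
        moreover have "inj_on \<pi> (E' \<inter> dl_group g' k' t)"
          using \<pi>inj by (rule inj_on_subset) (use E'bnd in \<open>auto simp: N'_def\<close>)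
        ultimately show ?thesis using E'one[OF True] by (simp add: card_image)
      next
        case False
        have "E \<inter> local_group g k h t = {k + h + t}"
        proof
          show "E \<inter> local_group g k h t \<subseteq> {k + h + t}"
          proof
            fix i assume i: "i \<in> E \<inter> local_group g k h t"
            then consider p where "p \<in> E'" "i = \<pi> p" | t' where "t' \<in> {m'..<m}" "i = k + h + t'"
              unfolding E_def by blast
            then show "i \<in> {k + h + t}"
            proof cases
              case 1
              have pb: "p < k' + m'" using 1 E'bnd by auto
              then have "p \<in> dl_group g' k' t" using LGchar 1 i by auto
              then show ?thesis using False g'lt pb by (auto simp: DG)
            next
              case 2 then show ?thesis using i by (auto simp: LG G_def)
            qed
          qed
          show "{k + h + t} \<subseteq> E \<inter> local_group g k h t"
            using False t by (auto simp: E_def LG)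
        qed
        then show ?thesis by simp
      qed
    qed
    have E'N: "E' \<subseteq> {0..<N'}" using E'bnd by (auto simp: N'_def)
    have \<psi>out: "\<psi> y p = dl_enc H' g' k' r h y p" if "p \<notin> E'" for y p using that by (simp add: \<psi>_def)
    have main: "is_MDS (\<psi> ` msgs k') S' (k' + h) k'"
    proof (rule gen_MDS)
      show "finite S'" by (simp add: S'_def)
      have "card S' = N' - card E'" unfolding S'_def using E'N finE' by (simp add: card_Diff_subset)
      then show "card S' = k' + h" using cardE' by (simp add: N'_def)
      show "k' \<le> k' + h" by simp
    next
      fix y z :: "nat \<Rightarrow> 'a"
      show "\<psi> (y + z) = \<psi> y + \<psi> z" unfolding \<psi>_def by (simp add: dl_enc_add fun_eq_iff)
    next
      fix c and y :: "nat \<Rightarrow> 'a"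
      show "\<psi> (fscale c y) = fscale c (\<psi> y)" unfolding \<psi>_def dl_enc_scale by (simp add: fscale_def fun_eq_iff)
    next
      fix y :: "nat \<Rightarrow> 'a" assume y: "y \<in> msgs k'" and z: "\<psi> y = 0"
      have yv: "dl_enc H' g' k' r h y p = 0" if "p \<notin> E'" for p
        using \<psi>out[OF that, of y] z by simp
      show "y = 0"
      proof (rule ext)
        fix i
        show "y i = 0 i"
        proof (cases "i < k'")
          case False then show ?thesis using y by (simp add: msgs_def)
        next
          case ik: True
          show ?thesis
          proof (cases "i \<in> E'")
            case False then show ?thesis using yv[OF False] ik by (simp add: dl_enc_data)
          next
            case iE: True
            define t where "t = g' i"
            have t: "t < m'" using g'lt ik by (simp add: t_def)
            have iDG: "i \<in> dl_group g' k' t" using ik by (simp add: DG t_def)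
            have single: "E' \<inter> dl_group g' k' t = {i}"
            proof -
              obtain a where a: "E' \<inter> dl_group g' k' t = {a}" using E'one[OF t] card_1_singletonE by blast
              then show ?thesis using iE iDG by auto
            qed
            have "k' + t \<in> dl_group g' k' t" by (simp add: DG)
            then have ktE: "k' + t \<notin> E'" using single ik by auto
            define F where "F = {l. l < k' \<and> g' l = t}"
            have finF: "finite F" by (simp add: F_def)
            have iF: "i \<in> F" using ik by (simp add: F_def t_def)
            have "0 = dl_enc H' g' k' r h y (k' + t)" using yv[OF ktE] by simp
            also have "\<dots> = (\<Sum>l\<in>F. y l)" using t by (simp add: dl_enc_par m'd F_def)
            also have "\<dots> = y i + (\<Sum>l\<in>F - {i}. y l)" using finF iF by (rule sum.remove)
            also have "(\<Sum>l\<in>F - {i}. y l) = 0"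
            proof (rule sum.neutral, rule ballI)
              fix l assume l: "l \<in> F - {i}"
              then have "l \<in> dl_group g' k' t" by (simp add: DG F_def)
              then have "l \<notin> E'" using single l by auto
              moreover have "l < k'" using l by (simp add: F_def)
              ultimately show "y l = 0" using yv[of l] dl_enc_data[of l k' H' g' r h y] by simp
            qed
            finally show ?thesis by simp
          qed
        qed
      qed
    next
      fix y :: "nat \<Rightarrow> 'a" and i assume "i \<notin> S'"
      then consider "i \<in> E'" | "N' \<le> i" by (auto simp: S'_def)
      then show "\<psi> y i = 0"
      proof cases
        case 1 then show ?thesis by (simp add: \<psi>_def)
      next
        case 2 then show ?thesis by (simp add: \<psi>_def dl_enc_high N'_def m'd)
      qed
    next
      fix y :: "nat \<Rightarrow> 'a" assume y: "y \<in> msgs k'" and ne: "\<psi> y \<noteq> 0"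
      obtain p where p: "\<psi> y p \<noteq> 0" using ne by (auto simp: fun_eq_iff)
      have pE: "p \<notin> E'" using p by (auto simp: \<psi>_def)
      have pN: "p < N'"
      proof (rule ccontr)
        assume "\<not> p < N'"
        then have "dl_enc H' g' k' r h y p = 0" by (simp add: dl_enc_high N'_def m'd)
        then show False using p \<psi>out[OF pE] by simp
      qed
      let ?c = "\<lambda>i. if i \<in> E then 0 else local_enc H g k r h (X y) i"
      have notE: "\<pi> q \<notin> E" if "q < N'" "q \<notin> E'" for q
      proof
        assume "\<pi> q \<in> E"
        then consider q' where "q' \<in> E'" "\<pi> q = \<pi> q'" | t where "t \<in> {m'..<m}" "\<pi> q = k + h + t"
          unfolding E_def by blast
        then show False
        proof cases
          case 1
          then have "q = q'" using \<pi>inj that E'N by (auto dest: inj_onD)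
          then show False using 1 that by simp
        next
          case 2
          consider "q < k'" | "k' \<le> q" "q < k' + m'" | "k' + m' \<le> q" by linarith
          then show False
          proof cases
            case 1 then show False using \<pi>D[OF 1] Dsub 2 by auto
          next
            case 3 then show False using \<pi>R[OF 3 that(1)] Rsub 2 by auto
          next
            case c: 2 then show False using \<pi>P[OF c] 2 by auto
          qed
        qed
      qed
      have "?c (\<pi> p) = local_enc H g k r h (X y) (\<pi> p)" using notE[OF pN pE] by simp
      also have "\<dots> = dl_enc H' g' k' r h y p" using F4[OF pN] by simp
      also have "\<dots> = \<psi> y p" using \<psi>out[OF pE] by simp
      finally have "?c (\<pi> p) \<noteq> 0" using p by simp
      then have cne: "?c \<noteq> 0" by (rule fun_nz)
      have hw: "h + 1 \<le> hweight ({0..<k + h + m} - E) ?c"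
        by (rule dist_loc[OF Ep pc_mem[OF Xm] cne])
      have sub: "{i \<in> {0..<k + h + m} - E. ?c i \<noteq> 0} \<subseteq> \<pi> ` {q \<in> S'. \<psi> y q \<noteq> 0}"
      proof
        fix i assume i: "i \<in> {i \<in> {0..<k + h + m} - E. ?c i \<noteq> 0}"
        then have iE: "i \<notin> E" and il: "i < k + h + m" and ci: "local_enc H g k r h (X y) i \<noteq> 0"
          by auto
        have goal: "i \<in> \<pi> ` {q \<in> S'. \<psi> y q \<noteq> 0}" if q: "q < N'" "\<pi> q = i" for q
        proof -
          have "q \<notin> E'"
          proof
            assume "q \<in> E'" then have "i \<in> E" using q by (auto simp: E_def)
            then show False using iE by simp
          qed
          moreover then have "\<psi> y q = local_enc H g k r h (X y) i" using \<psi>out F4 q by simp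
          ultimately show ?thesis using q ci by (auto simp: S'_def)
        qed
        show "i \<in> \<pi> ` {q \<in> S'. \<psi> y q \<noteq> 0}"
        proof (cases "i < k + h")
          case True
          then have "i \<in> D \<or> i \<in> A \<or> i \<in> R" by (auto simp: R_def Q_def)
          then consider "i \<in> D" | "i \<in> A" | "i \<in> R" by blast
          then show ?thesis
          proof cases
            case 1
            then obtain q where q: "q < k'" "\<sigma> q = i" using \<sigma>img by auto
            show ?thesis using goal[of q] q \<pi>D[OF q(1)] by (simp add: N'_def)
          next
            case 2
            then have "local_enc H g k r h (X y) i = 0" using True XA by (simp add: local_enc_low)
            then show ?thesis using ci by simp
          next
            case 3
            then obtain j where j: "j < h" "\<tau> j = i" using \<tau>img by auto
            have "\<pi> (k' + m' + j) = i" using \<pi>R[of "k' + m' + j"] j by (simp add: N'_def)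
            then show ?thesis using goal[of "k' + m' + j"] j by (simp add: N'_def)
          qed
        next
          case False
          define t where "t = i - (k + h)"
          have ieq: "i = k + h + t" using False by (simp add: t_def)
          have tm: "t < m" using il False by (simp add: t_def)
          have "t < m'"
          proof (rule ccontr)
            assume "\<not> t < m'"
            then have "i \<in> E" using tm ieq unfolding E_def by auto
            then show False using iE by simp
          qed
          then have "\<pi> (k' + t) = i" using \<pi>P[of "k' + t"] ieq by simp
          then show ?thesis using goal[of "k' + t"] \<open>t < m'\<close> by (simp add: N'_def)
        qed
      qed
      have "hweight ({0..<k + h + m} - E) ?c \<le> card (\<pi> ` {q \<in> S'. \<psi> y q \<noteq> 0})"
        unfolding hweight_def by (rule card_mono[OF _ sub]) (simp add: S'_def)
      also have "\<dots> \<le> card {q \<in> S'. \<psi> y q \<noteq> 0}" by (rule card_image_le) (simp add: S'_def)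
      also have "\<dots> = hweight S' (\<psi> y)" by (simp add: hweight_def)
      finally show "k' + h - k' + 1 \<le> hweight S' (\<psi> y)" using hw by simp
    qed
    have "{0..<k' + k' div r + h} - E' = S'" by (simp add: S'_def N'_def m'd)
    then show ?thesis unfolding pun using main by simp
  qed
  show ?thesis using grp' MDS' unfolding MR_data_local_def by blast
qed
end
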